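(* Let $S$ be a finite poset such that $\Gamma(S)$ contains a cycle but $\Gamma(S')$ is acyclic for every proper subset $S'\subset S$ with the induced order. Then $S$ is isomorphic either to $V$ or to $W^{2k}$ for some $k\ge2$.
   Context: $\Gamma(S)$ is the Hasse graph of $S$ (vertices $S$, edge between $s,s'$ when one covers the other); a cycle is a sequence of $m\ge3$ distinct vertices with consecutive ones (and the last and first) adjacent. $V=\{h^-,h_1,h_2,h^+\}$ with $h^-<h_1<h^+$, $h^-<h_2<h^+$, $h_1,h_2$ incomparable. $W^{2k}=\{s_1^-,\dots,s_k^-,s_1^+,\dots,s_k^+\}$ with the order whose only strict relations are $s_i^-<s_i^+$ ($1\le i\le k$), $s_i^-<s_{i+1}^+$ ($1\le i\le k-1$) and $s_k^-<s_1^+$ (a crown). *)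

theory Defs
  imports Main
begin

text \<open>A finite poset is a carrier set S with a (non-strict) order relation le.
  Subsets carry the induced order (same relation, restricted carrier).\<close>

definition poset_on :: "'a set \<Rightarrow> ('a \<Rightarrow> 'a \<Rightarrow> bool) \<Rightarrow> bool" where
  "poset_on S le \<longleftrightarrow>
     (\<forall>x\<in>S. le x x) \<and>
     (\<forall>x\<in>S. \<forall>y\<in>S. le x y \<and> le y x \<longrightarrow> x = y) \<and>
     (\<forall>x\<in>S. \<forall>y\<in>S. \<forall>z\<in>S. le x y \<and> le y z \<longrightarrow> le x z)"

definition covers :: "'a set \<Rightarrow> ('a \<Rightarrow> 'a \<Rightarrow> bool) \<Rightarrow> 'a \<Rightarrow> 'a \<Rightarrow> bool" where
  "covers S le x y \<longleftrightarrow> x \<in> S \<and> y \<in> S \<and> le x y \<and> x \<noteq> y \<and>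
     \<not> (\<exists>z\<in>S. le x z \<and> le z y \<and> z \<noteq> x \<and> z \<noteq> y)"

definition hasse_adj :: "'a set \<Rightarrow> ('a \<Rightarrow> 'a \<Rightarrow> bool) \<Rightarrow> 'a \<Rightarrow> 'a \<Rightarrow> bool" where
  "hasse_adj S le x y \<longleftrightarrow> covers S le x y \<or> covers S le y x"

definition hasse_has_cycle :: "'a set \<Rightarrow> ('a \<Rightarrow> 'a \<Rightarrow> bool) \<Rightarrow> bool" where
  "hasse_has_cycle S le \<longleftrightarrow>
     (\<exists>xs. length xs \<ge> 3 \<and> distinct xs \<and> set xs \<subseteq> S \<and>
        (\<forall>i < length xs. hasse_adj S le (xs ! i) (xs ! ((i + 1) mod length xs))))"

definition order_iso :: "'a set \<Rightarrow> ('a \<Rightarrow> 'a \<Rightarrow> bool) \<Rightarrow> 'b set \<Rightarrow> ('b \<Rightarrow> 'b \<Rightarrow> bool) \<Rightarrow> bool" where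
  "order_iso S le T le' \<longleftrightarrow>
     (\<exists>f. bij_betw f S T \<and> (\<forall>x\<in>S. \<forall>y\<in>S. le x y \<longleftrightarrow> le' (f x) (f y)))"

text \<open>The poset V: h^- = 0, h_1 = 1, h_2 = 2, h^+ = 3.\<close>
definition V_set :: "nat set" where "V_set = {0, 1, 2, 3}"
definition V_le :: "nat \<Rightarrow> nat \<Rightarrow> bool" where
  "V_le x y \<longleftrightarrow> x = y \<or> x = 0 \<or> y = 3"

text \<open>The crown W^{2k}: s_{i+1}^- is (False, i), s_{i+1}^+ is (True, i), for i < k.
  Strict relations: s_i^- < s_i^+, s_i^- < s_{i+1}^+, s_k^- < s_1^+.\<close>
definition W_set :: "nat \<Rightarrow> (bool \<times> nat) set" where
  "W_set k = {(b, i). i < k}"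
definition W_le :: "nat \<Rightarrow> bool \<times> nat \<Rightarrow> bool \<times> nat \<Rightarrow> bool" where
  "W_le k p q \<longleftrightarrow> p = q \<or>
     (\<not> fst p \<and> fst q \<and> (snd q = snd p \<or> snd q = (snd p + 1) mod k))"

end

theory Submission
  imports Defs
begin

definition cyc :: "'a set \<Rightarrow> ('a \<Rightarrow> 'a \<Rightarrow> bool) \<Rightarrow> 'a list \<Rightarrow> bool" where
  "cyc S le xs \<longleftrightarrow> length xs \<ge> 3 \<and> distinct xs \<and> set xs \<subseteq> S \<and>
     (\<forall>i < length xs. hasse_adj S le (xs ! i) (xs ! ((i + 1) mod length xs)))"

lemma ne3 [simp]: "3 \<le> length xs \<Longrightarrow> xs \<noteq> []"
  by auto

lemma hhc_cyc: "hasse_has_cycle S le \<longleftrightarrow> (\<exists>xs. cyc S le xs)"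
  unfolding hasse_has_cycle_def cyc_def by simp

lemma covers_mono: "covers S le x y \<Longrightarrow> x \<in> T \<Longrightarrow> y \<in> T \<Longrightarrow> T \<subseteq> S \<Longrightarrow> covers T le x y"
  unfolding covers_def by blast

lemma adj_mono: "hasse_adj S le x y \<Longrightarrow> x \<in> T \<Longrightarrow> y \<in> T \<Longrightarrow> T \<subseteq> S \<Longrightarrow> hasse_adj T le x y"
  unfolding hasse_adj_def using covers_mono by metis

lemma adj_sym: "hasse_adj S le x y \<longleftrightarrow> hasse_adj S le y x"
  unfolding hasse_adj_def by blast

lemma adj_neq: "hasse_adj S le x y \<Longrightarrow> x \<noteq> y"
  unfolding hasse_adj_def covers_def by blast

lemma cyc_mono: assumes "cyc S le xs" "set xs \<subseteq> T" "T \<subseteq> S" shows "cyc T le xs"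
proof -
  have "\<forall>i < length xs. hasse_adj T le (xs ! i) (xs ! ((i + 1) mod length xs))"
  proof (intro allI impI)
    fix i assume i: "i < length xs"
    have "hasse_adj S le (xs ! i) (xs ! ((i + 1) mod length xs))" using assms(1) i unfolding cyc_def by blast
    moreover have "xs ! i \<in> T" using i assms(2) nth_mem by blast
    moreover have "xs ! ((i + 1) mod length xs) \<in> T"
    proof -
      have "0 < length xs" using i by linarith
      then have "(i + 1) mod length xs < length xs" by (rule mod_less_divisor)
      then show ?thesis using assms(2) nth_mem by blast
    qed
    ultimately show "hasse_adj T le (xs ! i) (xs ! ((i + 1) mod length xs))"
      using adj_mono assms(3) by metis
  qed
  then show ?thesis using assms unfolding cyc_def by auto
qed

lemma cyc_rotate: assumes "cyc S le xs" shows "cyc S le (rotate n xs)"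
proof -
  let ?L = "length xs"
  have L: "?L \<ge> 3" using assms unfolding cyc_def by blast
  have "\<forall>i < ?L. hasse_adj S le (rotate n xs ! i) (rotate n xs ! ((i + 1) mod ?L))"
  proof (intro allI impI)
    fix i assume i: "i < ?L"
    have e1: "rotate n xs ! i = xs ! ((i + n) mod ?L)" using i by (simp add: nth_rotate add.commute)
    have e2: "rotate n xs ! ((i + 1) mod ?L) = xs ! (((i+n) mod ?L + 1) mod ?L)"
    proof -
      have lt: "(i+1) mod ?L < ?L" using L by auto
      have "rotate n xs ! ((i + 1) mod ?L) = xs ! ((n + (i+1) mod ?L) mod ?L)"
        by (rule nth_rotate[OF lt])
      also have "(n + (i+1) mod ?L) mod ?L = (n + (i+1)) mod ?L"
        by (rule mod_add_right_eq)
      also have "n + (i+1) = (i+n) + 1" by simp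
      also have "((i+n) + 1) mod ?L = ((i+n) mod ?L + 1) mod ?L"
        by (rule mod_add_left_eq[symmetric])
      finally show ?thesis .
    qed
    have "(i + n) mod ?L < ?L" using L by simp
    then show "hasse_adj S le (rotate n xs ! i) (rotate n xs ! ((i + 1) mod ?L))"
      using assms unfolding cyc_def e1 e2 by blast
  qed
  then show ?thesis using assms unfolding cyc_def by simp
qed

definition dual :: "('a \<Rightarrow> 'a \<Rightarrow> bool) \<Rightarrow> 'a \<Rightarrow> 'a \<Rightarrow> bool" where
  "dual le x y = le y x"

lemma poset_dual: "poset_on S le \<Longrightarrow> poset_on S (dual le)"
  unfolding poset_on_def dual_def by blast

lemma covers_dual: "covers S (dual le) x y = covers S le y x"
  unfolding covers_def dual_def by blast

lemma adj_dual: "hasse_adj S (dual le) x y = hasse_adj S le x y"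
  unfolding hasse_adj_def covers_dual by blast

lemma cyc_dual: "cyc S (dual le) xs = cyc S le xs"
  unfolding cyc_def adj_dual ..

lemma hhc_dual: "hasse_has_cycle S (dual le) = hasse_has_cycle S le"
  unfolding hhc_cyc cyc_dual ..

lemma lower_cover:
  assumes fin: "finite S" and po: "poset_on S le" and zS: "z \<in> S"
  shows "y \<in> S \<Longrightarrow> le y z \<Longrightarrow> y \<noteq> z \<Longrightarrow> \<exists>w\<in>S. le y w \<and> covers S le w z"
proof (induction "card {u\<in>S. le y u \<and> le u z \<and> u \<noteq> z}" arbitrary: y rule: less_induct)
  case (less y)
  show ?case
  proof (cases "covers S le y z")
    case True then show ?thesis using less.prems po unfolding poset_on_def by blast
  next
    case False
    then obtain u where u: "u\<in>S" "le y u" "le u z" "u\<noteq>y" "u\<noteq>z"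
      using less.prems zS unfolding covers_def by auto
    have sub: "{v\<in>S. le u v \<and> le v z \<and> v \<noteq> z} \<subset> {v\<in>S. le y v \<and> le v z \<and> v\<noteq>z}"
    proof
      show "{v\<in>S. le u v \<and> le v z \<and> v \<noteq> z} \<subseteq> {v\<in>S. le y v \<and> le v z \<and> v\<noteq>z}"
        using po u less.prems unfolding poset_on_def by blast
      have "y \<notin> {v\<in>S. le u v \<and> le v z \<and> v \<noteq> z}"
        using po u less.prems unfolding poset_on_def by blast
      moreover have "y \<in> {v\<in>S. le y v \<and> le v z \<and> v\<noteq>z}"
        using po less.prems unfolding poset_on_def by blast
      ultimately show "{v\<in>S. le u v \<and> le v z \<and> v \<noteq> z} \<noteq> {v\<in>S. le y v \<and> le v z \<and> v\<noteq>z}"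
        by blast
    qed
    have "card {v\<in>S. le u v \<and> le v z \<and> v \<noteq> z} < card {v\<in>S. le y v \<and> le v z \<and> v\<noteq>z}"
      using sub fin by (simp add: psubset_card_mono)
    from less.hyps[OF this u(1) u(3) u(5)] obtain w where w: "w\<in>S" "le u w" "covers S le w z"
      by blast
    have "le y w" using po u w less.prems unfolding poset_on_def by blast
    then show ?thesis using w by blast
  qed
qed

lemma upper_cover:
  assumes fin: "finite S" and po: "poset_on S le" and "z \<in> S" "y \<in> S" "le y z" "y \<noteq> z"
  shows "\<exists>w\<in>S. covers S le y w \<and> le w z"
proof -
  have "\<exists>w\<in>S. dual le z w \<and> covers S (dual le) w y"
    using lower_cover[OF fin poset_dual[OF po] assms(4), of z] assms by (simp add: dual_def)
  then show ?thesis unfolding covers_dual by (auto simp: dual_def)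
qed

lemma iso_inv:
  assumes "bij_betw g T S" "\<forall>p\<in>T. \<forall>q\<in>T. le' p q \<longleftrightarrow> le (g p) (g q)"
  shows "order_iso S le T le'"
  unfolding order_iso_def
proof (intro exI conjI ballI)
  show "bij_betw (inv_into T g) S T" using assms(1) by (simp add: bij_betw_inv_into)
  fix x y assume "x \<in> S" "y \<in> S"
  then have "x = g (inv_into T g x)" "y = g (inv_into T g y)"
    "inv_into T g x \<in> T" "inv_into T g y \<in> T"
    using assms(1) by (auto simp: bij_betw_def f_inv_into_f inv_into_into)
  then show "le x y \<longleftrightarrow> le' (inv_into T g x) (inv_into T g y)" using assms(2) by metis
qed

lemma PT0:
  assumes cy: "cyc S le ys" and Sy: "set ys = S" and M: "\<forall>T. T \<subset> S \<longrightarrow> \<not> hasse_has_cycle T le"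
   and po: "poset_on S le"
   and c1: "covers S le (ys!(length ys - 2)) (ys!(length ys - 1))"
   and c2: "covers S le (ys!(length ys - 1)) (ys!0)"
  shows "\<exists>z\<in>S. z \<noteq> ys!(length ys - 1) \<and> z \<noteq> ys!(length ys - 2) \<and> z \<noteq> ys!0 \<and>
           le (ys!(length ys - 2)) z \<and> le z (ys!0)"
proof (rule ccontr)
  assume nz: "\<not> ?thesis"
  define m where "m = length ys"
  define b where "b = ys!(m-2)"
  define x where "x = ys!(m-1)"
  define a where "a = ys!0"
  have m3: "m \<ge> 3" using cy by (simp add: cyc_def m_def)
  have dist: "distinct ys" using cy unfolding cyc_def by auto
  have allS: "\<forall>k<m. ys!k \<in> S" using Sy m_def by auto
  have bS: "b \<in> S" "x \<in> S" "a \<in> S" using m3 allS unfolding b_def x_def a_def by auto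
  have bx: "le b x" "b \<noteq> x" "le x a" "x \<noteq> a"
    using c1 c2 unfolding covers_def b_def x_def a_def m_def by auto
  have leba: "le b a" using po bS bx unfolding poset_on_def by blast
  have ba: "b \<noteq> a"
  proof -
    have "m - 2 < length ys" "0 < length ys" using m3 m_def by auto
    then have "(ys!(m-2) = ys!0) = (m-2 = 0)" by (rule nth_eq_iff_index_eq[OF dist])
    then show ?thesis using m3 unfolding b_def a_def by simp
  qed
  have nocov: "\<not> covers S le b a" using bx bS unfolding covers_def by blast
  have nocov2: "\<not> covers S le a b" using leba ba po bS unfolding covers_def poset_on_def by blast
  have nz': "\<not> (\<exists>z\<in>S. z \<noteq> x \<and> z \<noteq> b \<and> z \<noteq> a \<and> le b z \<and> le z a)"
    using nz unfolding b_def x_def a_def m_def by blast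
  show False
  proof (cases "m = 3")
    case True
    have "0 < length ys" using m3 m_def by simp
    then have "hasse_adj S le (ys!0) (ys!((0+1) mod m))" using cy unfolding cyc_def m_def by blast
    moreover have "(0+1) mod m = m - 2" using True by simp
    ultimately have "hasse_adj S le a b" unfolding a_def b_def by simp
    then show False using nocov nocov2 unfolding hasse_adj_def by blast
  next
    case False
    then have m4: "m \<ge> 4" using m3 by simp
    define zs where "zs = butlast ys"
    define S' where "S' = S - {x}"
    have ne: "ys \<noteq> []" using m3 unfolding m_def by auto
    have lz: "length zs = m - 1" unfolding zs_def m_def by simp
    have lastx: "last ys = x" unfolding x_def m_def using ne by (rule last_conv_nth)
    have ys_eq: "ys = zs @ [x]" unfolding zs_def lastx[symmetric] using ne by simp
    have dz: "distinct (zs @ [x])" using dist ys_eq by metis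
    then have xnot: "x \<notin> set zs" by simp
    have sy: "set ys = insert x (set zs)" by (subst ys_eq) simp
    have setz: "set zs \<subseteq> S'" using Sy sy xnot unfolding S'_def by blast
    have S'S: "S' \<subseteq> S" unfolding S'_def by blast
    have bS': "b \<in> S'" "a \<in> S'" using bS bx unfolding S'_def by blast+
    have "cyc S' le zs"
      unfolding cyc_def
    proof (intro conjI allI impI)
      show "3 \<le> length zs" using lz m4 by simp
      show "distinct zs" using dz by simp
      show "set zs \<subseteq> S'" by (rule setz)
      fix j assume j: "j < length zs"
      show "hasse_adj S' le (zs ! j) (zs ! ((j + 1) mod length zs))"
      proof (cases "j + 1 < length zs")
        case True
        have e1: "zs ! j = ys ! j" using j unfolding zs_def by (rule nth_butlast)
        have e2: "zs ! (j + 1) = ys ! (j + 1)" using True unfolding zs_def by (rule nth_butlast)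
        have md: "(j + 1) mod length zs = j + 1" using True by (rule mod_less)
        have jl: "j < length ys" using j lz m_def by linarith
        have j1: "j + 1 < length ys" using True lz m_def by linarith
        have md2: "(j + 1) mod length ys = j + 1" using j1 by (rule mod_less)
        have "hasse_adj S le (ys ! j) (ys ! ((j+1) mod length ys))" using cy jl unfolding cyc_def by blast
        then have adjS: "hasse_adj S le (zs ! j) (zs ! (j+1))" unfolding md2 e1 e2 .
        have m1: "zs ! j \<in> S'" using j setz nth_mem by blast
        have m2: "zs ! (j+1) \<in> S'" using True setz nth_mem by blast
        show ?thesis unfolding md by (rule adj_mono[OF adjS m1 m2 S'S])
      next
        case False
        then have jj: "j + 1 = length zs" using j by linarith
        then have jm: "j = m - 2" using lz by linarith
        have e1: "zs ! j = b" unfolding b_def jm[symmetric] using j unfolding zs_def by (rule nth_butlast)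
        have md: "(j + 1) mod length zs = 0" unfolding jj by simp
        have z0: "0 < length zs" using j by linarith
        have e2: "zs ! 0 = a" unfolding a_def using z0 unfolding zs_def by (rule nth_butlast)
        have "covers S' le b a"
          unfolding covers_def using bS' leba ba nz' unfolding S'_def by blast
        then show ?thesis unfolding md e1 e2 hasse_adj_def by blast
      qed
    qed
    then have "hasse_has_cycle S' le" using hhc_cyc by blast
    moreover have "S' \<subset> S" using bS unfolding S'_def by blast
    ultimately show False using M by blast
  qed
qed

lemma PT:
  assumes cy: "cyc S le ys" and Sy: "set ys = S" and M: "\<forall>T. T \<subset> S \<longrightarrow> \<not> hasse_has_cycle T le"
   and po: "poset_on S le" and i: "i < length ys"
   and c1: "covers S le (ys!i) (ys!((i+1) mod length ys))"
   and c2: "covers S le (ys!((i+1) mod length ys)) (ys!((i+2) mod length ys))"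
  shows "\<exists>z\<in>S. z \<noteq> ys!((i+1) mod length ys) \<and> z \<noteq> ys!i \<and> z \<noteq> ys!((i+2) mod length ys) \<and>
           le (ys!i) z \<and> le z (ys!((i+2) mod length ys))"
proof -
  define L where "L = length ys"
  define r where "r = rotate (i+2) ys"
  have L3: "L \<ge> 3" using cy unfolding cyc_def L_def by blast
  have cr: "cyc S le r" using cy cyc_rotate r_def by blast
  have sr: "set r = S" using Sy r_def by simp
  have lr: "length r = L" using r_def L_def by simp
  have r1: "r!(L-2) = ys!i"
  proof -
    have "r!(L-2) = ys!(((i+2) + (L-2)) mod L)" unfolding r_def L_def by (rule nth_rotate) (use L3 L_def in simp)
    also have "((i+2) + (L-2)) mod L = i"
    proof -
      have h: "(i+2) + (L-2) = i + L" using L3 by simp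
      show ?thesis unfolding h using i L_def by simp
    qed
    finally show ?thesis .
  qed
  have r2: "r!(L-1) = ys!((i+1) mod L)"
  proof -
    have "r!(L-1) = ys!(((i+2) + (L-1)) mod L)" unfolding r_def L_def by (rule nth_rotate) (use L3 L_def in simp)
    also have "((i+2) + (L-1)) mod L = (i+1) mod L"
    proof -
      have h: "(i+2) + (L-1) = (i+1) + L" using L3 by simp
      show ?thesis unfolding h by (rule mod_add_self2)
    qed
    finally show ?thesis .
  qed
  have r3: "r!0 = ys!((i+2) mod L)"
  proof -
    have "r!0 = ys!(((i+2) + 0) mod L)" unfolding r_def L_def by (rule nth_rotate) (use L3 L_def in simp)
    then show ?thesis by simp
  qed
  show ?thesis
    using PT0[OF cr sr M po] c1 c2 r1 r2 r3 lr unfolding L_def by simp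
qed

lemma dnth: "distinct xs \<Longrightarrow> a < length xs \<Longrightarrow> b < length xs \<Longrightarrow> xs!a = xs!b \<Longrightarrow> a = b"
  by (simp add: nth_eq_iff_index_eq)

lemma modsuc: "(a::nat) < m \<Longrightarrow> (a + 1) mod m = (if a + 1 = m then 0 else a + 1)"
  by auto

lemma chord0:
  assumes cy: "cyc S le ys" and j: "2 \<le> j" "j + 2 \<le> length ys"
    and adj: "hasse_adj S le (ys!0) (ys!j)"
  shows "hasse_has_cycle (set (take (j+1) ys)) le \<and> set (take (j+1) ys) \<subset> set ys"
proof -
  define zs where "zs = take (j+1) ys"
  define L where "L = length ys"
  have lz: "length zs = j+1" using j unfolding zs_def by simp
  have dist: "distinct ys" using cy unfolding cyc_def by blast
  have sub: "set zs \<subseteq> set ys" unfolding zs_def by (rule set_take_subset)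
  have yS: "set ys \<subseteq> S" using cy unfolding cyc_def by blast
  have zS: "set zs \<subseteq> S" using sub yS by blast
  have "cyc (set zs) le zs" unfolding cyc_def
  proof (intro conjI allI impI)
    show "3 \<le> length zs" using lz j by simp
    show "distinct zs" using dist zs_def by simp
    show "set zs \<subseteq> set zs" by simp
    fix i assume i: "i < length zs"
    have m1: "zs ! i \<in> set zs" using i by simp
    have m2: "zs ! ((i+1) mod length zs) \<in> set zs" using lz by simp
    show "hasse_adj (set zs) le (zs ! i) (zs ! ((i + 1) mod length zs))"
    proof (cases "i < j")
      case True
      have il: "i < length ys" using True j by linarith
      have i1: "i + 1 < length ys" using True j by linarith
      have md2: "(i + 1) mod length ys = i + 1" using i1 by (rule mod_less)
      have i1z: "i + 1 < length zs" using True lz by linarith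
      have md: "(i + 1) mod length zs = i + 1" using i1z by (rule mod_less)
      have e1: "zs ! i = ys ! i" unfolding zs_def using True by (intro nth_take) linarith
      have e2: "zs ! (i + 1) = ys ! (i + 1)" unfolding zs_def using True by (intro nth_take) linarith
      have "hasse_adj S le (ys ! i) (ys ! ((i+1) mod length ys))" using cy il unfolding cyc_def by blast
      then have "hasse_adj S le (zs ! i) (zs ! ((i + 1) mod length zs))" unfolding md md2 e1 e2 .
      then show ?thesis using adj_mono m1 m2 zS by metis
    next
      case False
      then have ij: "i = j" using i lz by simp
      have e: "zs ! i = ys ! j" "zs ! ((i + 1) mod length zs) = ys ! 0"
        using ij lz j by (simp_all add: zs_def)
      have "hasse_adj S le (ys ! j) (ys ! 0)" using adj adj_sym by metis
      then show ?thesis using adj_mono m1 m2 zS unfolding e by metis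
    qed
  qed
  then have "hasse_has_cycle (set zs) le" using hhc_cyc by blast
  moreover have "set zs \<noteq> set ys"
  proof
    assume "set zs = set ys"
    then have "ys ! (L-1) \<in> set zs" using j L_def by simp
    then obtain k where k: "k < length zs" "zs ! k = ys ! (L-1)" by (auto simp: in_set_conv_nth)
    then have "ys ! k = ys ! (L-1)" using lz j by (simp add: zs_def)
    then have "k = L - 1" using dnth[OF dist] k lz j L_def by simp
    then show False using k lz j L_def by simp
  qed
  ultimately show ?thesis using sub unfolding zs_def by blast
qed

lemma chord:
  assumes cy: "cyc S le ys" and Sy: "set ys = S" and M: "\<forall>T. T \<subset> S \<longrightarrow> \<not> hasse_has_cycle T le"
   and i: "i < length ys" and j: "j < length ys"
   and adj: "hasse_adj S le (ys!i) (ys!j)"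
  shows "j = (i+1) mod length ys \<or> i = (j+1) mod length ys"
proof (rule ccontr)
  assume nc: "\<not> ?thesis"
  define L where "L = length ys"
  define r where "r = rotate i ys"
  define j' where "j' = (j + (L - i)) mod L"
  have L3: "L \<ge> 3" using cy unfolding cyc_def L_def by blast
  have dist: "distinct ys" using cy unfolding cyc_def by blast
  have rk: "\<And>k. k < L \<Longrightarrow> r!k = ys!((i+k) mod L)" unfolding r_def L_def by (rule nth_rotate) (simp add: L_def)
  have jl: "j' < L" using L3 unfolding j'_def by simp
  have rj: "r!j' = ys!j"
  proof -
    have "(i + j') mod L = (i + (j + (L - i))) mod L" unfolding j'_def by (simp add: mod_add_right_eq)
    also have "i + (j + (L - i)) = j + L" using i L_def by simp
    finally have "(i + j') mod L = j" using j L_def by simp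
    then show ?thesis using rk jl by simp
  qed
  have r0: "r!0 = ys!i" using rk L3 i L_def by simp
  have n0: "j' \<noteq> 0"
  proof
    assume "j' = 0"
    then have "ys!i = ys!j" using r0 rj by simp
    then show False using adj adj_neq by metis
  qed
  have n1: "j' \<noteq> 1"
  proof
    assume "j' = 1"
    then have "ys!j = ys!((i+1) mod L)" using rk rj L3 by simp
    then have "j = (i+1) mod L" using dnth[OF dist] j L_def L3 by simp
    then show False using nc L_def by simp
  qed
  have nL: "j' \<noteq> L - 1"
  proof
    assume "j' = L - 1"
    then have "ys!j = ys!((i+(L-1)) mod L)" using rk rj L3 by simp
    then have "j = (i+(L-1)) mod L" using dnth[OF dist] j L_def L3 by simp
    then have "(j+1) mod L = ((i+(L-1)) + 1) mod L" by (simp add: mod_Suc_eq)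
    also have "(i+(L-1)) + 1 = i + L" using L3 by simp
    finally have "(j+1) mod L = i" using i L_def by simp
    then show False using nc L_def by simp
  qed
  have cr: "cyc S le r" using cy cyc_rotate r_def by blast
  have "hasse_adj S le (r!0) (r!j')" using adj r0 rj by simp
  moreover have "2 \<le> j'" "j' + 2 \<le> length r" using n0 n1 nL jl by (auto simp: r_def L_def)
  ultimately have "hasse_has_cycle (set (take (j'+1) r)) le \<and> set (take (j'+1) r) \<subset> set r"
    using chord0[OF cr] by blast
  moreover have "set r = S" using Sy r_def by simp
  ultimately show False using M by blast
qed

lemma VCASE:
  assumes po: "poset_on S le" and M: "\<forall>T. T \<subset> S \<longrightarrow> \<not> hasse_has_cycle T le"
    and S: "b \<in> S" "x \<in> S" "z \<in> S" "a \<in> S"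
    and r: "le b x" "le x a" "le b z" "le z a" "b \<noteq> x" "x \<noteq> a" "b \<noteq> z" "z \<noteq> a"
    and nc: "\<not> le x z" "\<not> le z x"
  shows "order_iso S le V_set V_le"
proof -
  have refl: "\<And>u. u \<in> S \<Longrightarrow> le u u" using po unfolding poset_on_def by blast
  have anti: "\<And>u v. u \<in> S \<Longrightarrow> v \<in> S \<Longrightarrow> le u v \<Longrightarrow> le v u \<Longrightarrow> u = v"
    using po unfolding poset_on_def by blast
  have trans: "\<And>u v w. u \<in> S \<Longrightarrow> v \<in> S \<Longrightarrow> w \<in> S \<Longrightarrow> le u v \<Longrightarrow> le v w \<Longrightarrow> le u w"
    using po unfolding poset_on_def by blast
  have ba: "le b a" using trans[OF S(1) S(2) S(4) r(1) r(2)] .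
  have rb: "le b b" "le x x" "le z z" "le a a" using refl S by auto
  have dba: "b \<noteq> a"
  proof
    assume "b = a"
    then have "le x b" using r(2) by simp
    then show False using anti[OF S(1) S(2) r(1)] r(5) by simp
  qed
  have dxz: "x \<noteq> z" using nc(1) rb(2) by auto
  have n1: "\<not> le x b" using anti[OF S(1) S(2) r(1)] r(5) by auto
  have n2: "\<not> le a x" using anti[OF S(2) S(4) r(2)] r(6) by auto
  have n3: "\<not> le z b" using anti[OF S(1) S(3) r(3)] r(7) by auto
  have n4: "\<not> le a z" using anti[OF S(3) S(4) r(4)] r(8) by auto
  have n5: "\<not> le a b" using anti[OF S(1) S(4) ba] dba by auto
  note L = r(1-4) ba rb nc n1 n2 n3 n4 n5
  note D = r(5-8) dba dxz r(5-8)[symmetric] dba[symmetric] dxz[symmetric]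
  define T where "T = {b, x, z, a}"
  have TS: "T \<subseteq> S" using S T_def by auto
  have c1: "covers T le b x" unfolding covers_def T_def using L D by simp
  have c2: "covers T le x a" unfolding covers_def T_def using L D by simp
  have c3: "covers T le z a" unfolding covers_def T_def using L D by simp
  have c4: "covers T le b z" unfolding covers_def T_def using L D by simp
  have "cyc T le [b, x, a, z]" unfolding cyc_def
  proof (intro conjI allI impI)
    show "3 \<le> length [b, x, a, z]" by simp
    show "distinct [b, x, a, z]" using D by simp
    show "set [b, x, a, z] \<subseteq> T" unfolding T_def by auto
    fix i assume "i < length [b, x, a, z]"
    then have "i = 0 \<or> i = 1 \<or> i = 2 \<or> i = 3" by auto
    then show "hasse_adj T le ([b, x, a, z] ! i) ([b, x, a, z] ! ((i + 1) mod length [b, x, a, z]))"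
      unfolding hasse_adj_def using c1 c2 c3 c4 by (elim disjE) simp_all
  qed
  then have "hasse_has_cycle T le" using hhc_cyc by blast
  then have TeS: "T = S" using M TS by blast
  define g where "g = (\<lambda>n::nat. if n = 0 then b else if n = 1 then x else if n = 2 then z else a)"
  have inj: "inj_on g V_set"
    unfolding inj_on_def V_set_def g_def using D by simp
  have img: "g ` V_set = S"
    unfolding V_set_def g_def TeS[symmetric] T_def by auto
  have bij: "bij_betw g V_set S" using inj img unfolding bij_betw_def by blast
  have rel: "\<forall>p\<in>V_set. \<forall>q\<in>V_set. V_le p q \<longleftrightarrow> le (g p) (g q)"
    unfolding V_set_def V_le_def g_def using L by simp
  show ?thesis by (rule iso_inv[OF bij rel])
qed

lemma arithW:
  fixes i j k m :: nat
  assumes "i < k" "j < k" "m = 2*k"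
  shows "((if b then 2*i else 2*i+1) = (if c then 2*j else 2*j+1) \<or>
     ((if c then 2*j else 2*j+1) = ((if b then 2*i else 2*i+1) + 1) mod m \<and> odd (if b then 2*i else 2*i+1)) \<or>
     ((if b then 2*i else 2*i+1) = ((if c then 2*j else 2*j+1) + 1) mod m \<and> even (if c then 2*j else 2*j+1)))
   \<longleftrightarrow> ((b,i) = (c,j) \<or> (\<not> b \<and> c \<and> (j = i \<or> j = (i+1) mod k)))"
proof -
  have a: "Suc i mod k = (if Suc i = k then 0 else Suc i)" using assms by auto
  have b1: "Suc (Suc (2*i)) mod (2*k) = (if Suc (Suc (2*i)) = 2*k then 0 else Suc (Suc (2*i)))" using assms by auto
  have b2: "Suc (Suc (2*j)) mod (2*k) = (if Suc (Suc (2*j)) = 2*k then 0 else Suc (Suc (2*j)))" using assms by auto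
  have b3: "Suc (2*i) mod (2*k) = Suc (2*i)" "Suc (2*j) mod (2*k) = Suc (2*j)" using assms by auto
  have b4: "Suc (2*i) mod (2*k) = Suc (2*i)" "(2*j) mod (2*k) = 2*j" using assms by auto
  have i: "i < k" "j < k" using assms by auto
  show ?thesis
  proof (cases b; cases c)
    assume "b" "c" then show ?thesis using i by (simp add: a b1 b2 b3 b4 assms(3)) presburger
  next
    assume "b" "\<not>c" then show ?thesis using i by (simp add: a b1 b2 b3 b4 assms(3)) presburger
  next
    assume "\<not>b" "c" then show ?thesis using i by (simp add: a b1 b2 b3 b4 assms(3)) presburger
  next
    assume "\<not>b" "\<not>c" then show ?thesis using i by (simp add: a b1 b2 b3 b4 assms(3)) presburger
  qed
qed

lemma crown:
  assumes fin: "finite S" and po: "poset_on S le" and M: "\<forall>T. T \<subset> S \<longrightarrow> \<not> hasse_has_cycle T le"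
    and cy: "cyc S le ys" and Sy: "set ys = S" and ev: "even (length ys)" and m4: "length ys \<ge> 4"
    and UP: "\<forall>i<length ys. covers S le (ys!i) (ys!((i+1) mod length ys)) \<longleftrightarrow> odd i"
  shows "order_iso S le (W_set (length ys div 2)) (W_le (length ys div 2))"
proof -
  define m where "m = length ys"
  define k where "k = m div 2"
  have mk: "m = 2 * k" using ev unfolding k_def m_def by simp
  have dist: "distinct ys" using cy unfolding cyc_def by blast
  have allS: "\<And>i. i < m \<Longrightarrow> ys!i \<in> S" using Sy m_def by auto
  have refl: "\<And>u. u \<in> S \<Longrightarrow> le u u" using po unfolding poset_on_def by blast
  have anti: "\<And>u v. u \<in> S \<Longrightarrow> v \<in> S \<Longrightarrow> le u v \<Longrightarrow> le v u \<Longrightarrow> u = v" using po unfolding poset_on_def by blast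
  have par: "\<And>j. j < m \<Longrightarrow> even ((j+1) mod m) \<longleftrightarrow> odd j"
  proof -
    fix j assume j: "j < m"
    show "even ((j+1) mod m) \<longleftrightarrow> odd j"
    proof (cases "j + 1 < m")
      case True then show ?thesis by simp
    next
      case False
      then have jm: "j + 1 = m" using j by simp
      then have z: "(j+1) mod m = 0" by simp
      have "odd j" using jm mk by presburger
      then show ?thesis using z by simp
    qed
  qed
  have nodup: "\<And>i j. i < m \<Longrightarrow> j < m \<Longrightarrow> ys!i = ys!j \<longleftrightarrow> i = j"
    using dist m_def by (simp add: nth_eq_iff_index_eq)
  have CH: "\<And>i j. i < m \<Longrightarrow> j < m \<Longrightarrow> hasse_adj S le (ys!i) (ys!j) \<Longrightarrow> j = (i+1) mod m \<or> i = (j+1) mod m"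
    using chord[OF cy Sy M] m_def by blast
  have UP': "\<And>i. i < m \<Longrightarrow> covers S le (ys!i) (ys!((i+1) mod m)) \<longleftrightarrow> odd i" using UP m_def by blast
  have DN: "\<And>j. j < m \<Longrightarrow> covers S le (ys!((j+1) mod m)) (ys!j) \<longleftrightarrow> even j"
  proof -
    fix j assume j: "j < m"
    have adj: "hasse_adj S le (ys!j) (ys!((j+1) mod m))" using cy j unfolding cyc_def m_def by blast
    have "\<not> (covers S le (ys!j) (ys!((j+1) mod m)) \<and> covers S le (ys!((j+1) mod m)) (ys!j))"
      using anti unfolding covers_def by blast
    then show "covers S le (ys!((j+1) mod m)) (ys!j) \<longleftrightarrow> even j"
      using adj UP'[OF j] unfolding hasse_adj_def by blast
  qed
  have COV: "\<And>i j. i < m \<Longrightarrow> j < m \<Longrightarrow> covers S le (ys!i) (ys!j) \<longleftrightarrow>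
      (j = (i+1) mod m \<and> odd i) \<or> (i = (j+1) mod m \<and> even j)"
  proof -
    fix i j assume i: "i < m" and j: "j < m"
    show "covers S le (ys!i) (ys!j) \<longleftrightarrow> (j = (i+1) mod m \<and> odd i) \<or> (i = (j+1) mod m \<and> even j)"
    proof
      assume c: "covers S le (ys!i) (ys!j)"
      then have "hasse_adj S le (ys!i) (ys!j)" unfolding hasse_adj_def by blast
      then have "j = (i+1) mod m \<or> i = (j+1) mod m" using CH i j by blast
      then show "(j = (i+1) mod m \<and> odd i) \<or> (i = (j+1) mod m \<and> even j)"
      proof (elim disjE)
        assume h: "j = (i+1) mod m"
        have "covers S le (ys!i) (ys!((i+1) mod m))" using c h by simp
        then show ?thesis using UP'[OF i] h by blast
      next
        assume h: "i = (j+1) mod m"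
        have "covers S le (ys!((j+1) mod m)) (ys!j)" using c h by simp
        then show ?thesis using DN[OF j] h by blast
      qed
    next
      assume "(j = (i+1) mod m \<and> odd i) \<or> (i = (j+1) mod m \<and> even j)"
      then show "covers S le (ys!i) (ys!j)"
      proof (elim disjE conjE)
        assume h: "j = (i+1) mod m" "odd i"
        then show ?thesis using UP'[OF i] by simp
      next
        assume h: "i = (j+1) mod m" "even j"
        then show ?thesis using DN[OF j] by simp
      qed
    qed
  qed
  have inS: "\<And>w. w \<in> S \<Longrightarrow> \<exists>l<m. w = ys!l" using Sy m_def by (auto simp: in_set_conv_nth)
  have MAX: "\<And>i y. i < m \<Longrightarrow> even i \<Longrightarrow> y \<in> S \<Longrightarrow> le (ys!i) y \<Longrightarrow> y = ys!i"
  proof (rule ccontr)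
    fix i y assume i: "i < m" "even i" and y: "y \<in> S" "le (ys!i) y" and ne: "y \<noteq> ys!i"
    obtain w where w: "w \<in> S" "covers S le (ys!i) w" "le w y"
      using upper_cover[OF fin po y(1) allS[OF i(1)] y(2)] ne by metis
    obtain l where l: "l < m" "w = ys!l" using inS w(1) by blast
    have "(l = (i+1) mod m \<and> odd i) \<or> (i = (l+1) mod m \<and> even l)" using COV i(1) l w(2) by blast
    then have h: "i = (l+1) mod m" "even l" using i(2) by blast+
    have "even ((l+1) mod m)" using h(1) i(2) by simp
    then show False using par[OF l(1)] h(2) by simp
  qed
  have MIN: "\<And>i y. i < m \<Longrightarrow> odd i \<Longrightarrow> y \<in> S \<Longrightarrow> le y (ys!i) \<Longrightarrow> y = ys!i"
  proof (rule ccontr)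
    fix i y assume i: "i < m" "odd i" and y: "y \<in> S" "le y (ys!i)" and ne: "y \<noteq> ys!i"
    obtain w where w: "w \<in> S" "le y w" "covers S le w (ys!i)"
      using lower_cover[OF fin po allS[OF i(1)] y(1) y(2)] ne by metis
    obtain l where l: "l < m" "w = ys!l" using inS w(1) by blast
    have "(i = (l+1) mod m \<and> odd l) \<or> (l = (i+1) mod m \<and> even i)" using COV i(1) l w(3) by blast
    then have h: "i = (l+1) mod m" "odd l" using i(2) by blast+
    have "even ((l+1) mod m)" using par[OF l(1)] h(2) by simp
    then show False using h(1) i(2) by simp
  qed
  have LE: "\<And>i j. i < m \<Longrightarrow> j < m \<Longrightarrow> le (ys!i) (ys!j) \<longleftrightarrow>
      i = j \<or> (j = (i+1) mod m \<and> odd i) \<or> (i = (j+1) mod m \<and> even j)"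
  proof -
    fix i j assume i: "i < m" and j: "j < m"
    show "le (ys!i) (ys!j) \<longleftrightarrow> i = j \<or> (j = (i+1) mod m \<and> odd i) \<or> (i = (j+1) mod m \<and> even j)"
    proof
      assume le: "le (ys!i) (ys!j)"
      show "i = j \<or> (j = (i+1) mod m \<and> odd i) \<or> (i = (j+1) mod m \<and> even j)"
      proof (cases "i = j")
        case True then show ?thesis by simp
      next
        case False
        then have ne: "ys!i \<noteq> ys!j" using nodup i j by blast
        have oi: "odd i" using MAX[OF i _ allS[OF j] le] ne by metis
        obtain w where w: "w \<in> S" "covers S le (ys!i) w" "le w (ys!j)"
          using upper_cover[OF fin po allS[OF j] allS[OF i] le ne] by metis
        obtain l where l: "l < m" "w = ys!l" using inS w(1) by blast
        have "(l = (i+1) mod m \<and> odd i) \<or> (i = (l+1) mod m \<and> even l)" using COV i l w(2) by blast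
        then have el: "even l"
        proof (elim disjE conjE)
          assume "l = (i+1) mod m" "odd i"
          then show "even l" using par[OF i] by simp
        qed simp
        have "ys!j = ys!l" using MAX[OF l(1) el allS[OF j]] w(3) l(2) by simp
        then have "covers S le (ys!i) (ys!j)" using w l by simp
        then show ?thesis using COV i j by blast
      qed
    next
      assume "i = j \<or> (j = (i+1) mod m \<and> odd i) \<or> (i = (j+1) mod m \<and> even j)"
      then show "le (ys!i) (ys!j)"
        using COV[OF i j] refl allS[OF i] unfolding covers_def by blast
    qed
  qed
  define idx where "idx = (\<lambda>p::bool \<times> nat. if fst p then 2 * snd p else 2 * snd p + 1)"
  define g where "g = (\<lambda>p. ys ! idx p)"
  have idxm: "\<And>p. p \<in> W_set k \<Longrightarrow> idx p < m" unfolding idx_def W_set_def mk by auto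
  have bij: "bij_betw g (W_set k) S"
    unfolding bij_betw_def
  proof
    show "inj_on g (W_set k)"
    proof (rule inj_onI)
      fix p q assume p: "p \<in> W_set k" and q: "q \<in> W_set k" and e: "g p = g q"
      then have "idx p = idx q" using nodup idxm unfolding g_def by blast
      have fi: "\<And>p. fst p = even (idx p)" unfolding idx_def by simp
      have si: "\<And>p. snd p = idx p div 2" unfolding idx_def by simp
      show "p = q" using fi[of p] fi[of q] si[of p] si[of q] \<open>idx p = idx q\<close> by (simp add: prod_eq_iff)
    qed
    show "g ` W_set k = S"
    proof
      show "g ` W_set k \<subseteq> S" using idxm allS unfolding g_def by blast
      show "S \<subseteq> g ` W_set k"
      proof
        fix y assume "y \<in> S"
        then obtain l where l: "l < m" "y = ys!l" using inS by blast
        define p where "p = (even l, l div 2)"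
        have "p \<in> W_set k" unfolding p_def W_set_def using l mk by auto
        moreover have "idx p = l" unfolding p_def idx_def by simp
        ultimately show "y \<in> g ` W_set k" unfolding g_def using l by force
      qed
    qed
  qed
  have rel: "\<forall>p\<in>W_set k. \<forall>q\<in>W_set k. W_le k p q \<longleftrightarrow> le (g p) (g q)"
  proof (intro ballI)
    fix p q assume p: "p \<in> W_set k" and q: "q \<in> W_set k"
    obtain b i where bi: "p = (b, i)" "i < k" using p unfolding W_set_def by auto
    obtain c j where cj: "q = (c, j)" "j < k" using q unfolding W_set_def by auto
    have "le (g p) (g q) \<longleftrightarrow> idx p = idx q \<or> (idx q = (idx p + 1) mod m \<and> odd (idx p)) \<or>
        (idx p = (idx q + 1) mod m \<and> even (idx q))"
      unfolding g_def using LE idxm p q by blast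
    also have "\<dots> \<longleftrightarrow> ((b,i) = (c,j) \<or> (\<not> b \<and> c \<and> (j = i \<or> j = (i+1) mod k)))"
      unfolding bi cj idx_def fst_conv snd_conv by (rule arithW[OF bi(2) cj(2) mk])
    also have "\<dots> \<longleftrightarrow> W_le k p q" unfolding W_le_def bi cj by auto
    finally show "W_le k p q \<longleftrightarrow> le (g p) (g q)" by simp
  qed
  show ?thesis using iso_inv[OF bij rel] unfolding k_def m_def .
qed

theorem lemma8:
  fixes S :: "'a set" and le :: "'a \<Rightarrow> 'a \<Rightarrow> bool"
  assumes "finite S"
    and "poset_on S le"
    and "hasse_has_cycle S le"
    and "\<And>S'. S' \<subset> S \<Longrightarrow> \<not> hasse_has_cycle S' le"
  shows "order_iso S le V_set V_le \<or> (\<exists>k\<ge>2. order_iso S le (W_set k) (W_le k))"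
proof -
  note fin = assms(1) and po = assms(2)
  have M: "\<forall>T. T \<subset> S \<longrightarrow> \<not> hasse_has_cycle T le" using assms(4) by blast
  have Md: "\<forall>T. T \<subset> S \<longrightarrow> \<not> hasse_has_cycle T (dual le)" using M hhc_dual by metis
  obtain xs where cy: "cyc S le xs" using assms(3) hhc_cyc by blast
  have xsS: "set xs \<subseteq> S" using cy unfolding cyc_def by blast
  have Sx: "set xs = S"
  proof (rule ccontr)
    assume "set xs \<noteq> S"
    then have ps: "set xs \<subset> S" using xsS by blast
    have "cyc (set xs) le xs" by (rule cyc_mono[OF cy subset_refl xsS])
    then have "hasse_has_cycle (set xs) le" using hhc_cyc by blast
    then show False using M ps by blast
  qed
  show ?thesis
  proof (cases "\<exists>b\<in>S. \<exists>x\<in>S. \<exists>z\<in>S. \<exists>a\<in>S. le b x \<and> le x a \<and> le b z \<and> le z a \<and>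
      b \<noteq> x \<and> x \<noteq> a \<and> b \<noteq> z \<and> z \<noteq> a \<and> \<not> le x z \<and> \<not> le z x")
    case True
    then obtain b x z a where v: "b \<in> S" "x \<in> S" "z \<in> S" "a \<in> S" "le b x" "le x a" "le b z" "le z a"
      "b \<noteq> x" "x \<noteq> a" "b \<noteq> z" "z \<noteq> a" "\<not> le x z" "\<not> le z x" by blast
    have "order_iso S le V_set V_le" by (rule VCASE[OF po M v])
    then show ?thesis by blast
  next
    case False
    have noV': "\<And>b x z a. b \<in> S \<Longrightarrow> x \<in> S \<Longrightarrow> z \<in> S \<Longrightarrow> a \<in> S \<Longrightarrow>
      le b x \<Longrightarrow> le x a \<Longrightarrow> le b z \<Longrightarrow> le z a \<Longrightarrow> b \<noteq> x \<Longrightarrow> x \<noteq> a \<Longrightarrow> b \<noteq> z \<Longrightarrow> z \<noteq> a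
      \<Longrightarrow> le x z \<or> le z x"
      using False by blast
    define m where "m = length xs"
    define up where "up i = covers S le (xs!i) (xs!((i+1) mod m))" for i
    have upE: "\<And>i. up i \<longleftrightarrow> covers S le (xs!i) (xs!((i+1) mod m))" by (simp add: up_def)
    have m3: "m \<ge> 3" using cy unfolding cyc_def m_def by blast
    have m0: "0 < m" using m3 by linarith
    have ltm: "\<And>n. n mod m < m" using m0 by simp
    have allS: "\<And>i. i < m \<Longrightarrow> xs!i \<in> S" using Sx m_def nth_mem by blast
    have ss: "\<And>i. ((i+1) mod m + 1) mod m = (i+2) mod m"
    proof -
      fix i
      have "((i+1) mod m + 1) mod m = ((i+1) + 1) mod m" by (rule mod_add_left_eq)
      then show "((i+1) mod m + 1) mod m = (i+2) mod m" by simp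
    qed
    have updn: "\<And>i. i < m \<Longrightarrow> up i \<or> covers S le (xs!((i+1) mod m)) (xs!i)"
    proof -
      fix i assume i: "i < m"
      have "hasse_adj S le (xs!i) (xs!((i+1) mod m))" using cy i unfolding cyc_def m_def by blast
      then show "up i \<or> covers S le (xs!((i+1) mod m)) (xs!i)" unfolding upE hasse_adj_def .
    qed
    have alt: "\<And>i. i < m \<Longrightarrow> up ((i+1) mod m) \<longleftrightarrow> \<not> up i"
    proof -
      fix i assume i: "i < m"
      have i1: "(i+1) mod m < m" by (rule ltm)
      have i2: "(i+2) mod m < m" by (rule ltm)
      have A: "\<not> (up i \<and> up ((i+1) mod m))"
      proof
        assume h: "up i \<and> up ((i+1) mod m)"
        have c1: "covers S le (xs!i) (xs!((i+1) mod m))" using h upE by blast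
        have c2': "covers S le (xs!((i+1) mod m)) (xs!(((i+1) mod m + 1) mod m))" using h upE by blast
        then have c2: "covers S le (xs!((i+1) mod m)) (xs!((i+2) mod m))" unfolding ss .
        have il: "i < length xs" using i m_def by simp
        obtain z where z: "z \<in> S" "z \<noteq> xs!((i+1) mod m)" "z \<noteq> xs!i" "z \<noteq> xs!((i+2) mod m)"
          "le (xs!i) z" "le z (xs!((i+2) mod m))"
          using PT[OF cy Sx M po il c1[unfolded m_def] c2[unfolded m_def]] unfolding m_def by blast
        have n1: "\<not> le (xs!((i+1) mod m)) z" using c2 z unfolding covers_def by blast
        have n2: "\<not> le z (xs!((i+1) mod m))" using c1 z unfolding covers_def by blast
        have f1: "le (xs!i) (xs!((i+1) mod m))" "xs!i \<noteq> xs!((i+1) mod m)" using c1 unfolding covers_def by blast+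
        have f2: "le (xs!((i+1) mod m)) (xs!((i+2) mod m))" "xs!((i+1) mod m) \<noteq> xs!((i+2) mod m)"
          using c2 unfolding covers_def by blast+
        have "le (xs!((i+1) mod m)) z \<or> le z (xs!((i+1) mod m))"
          by (rule noV'[OF allS[OF i] allS[OF i1] z(1) allS[OF i2] f1(1) f2(1) z(5) z(6) f1(2) f2(2) z(3)[symmetric] z(4)])
        then show False using n1 n2 by blast
      qed
      have B: "\<not> (\<not> up i \<and> \<not> up ((i+1) mod m))"
      proof
        assume h: "\<not> up i \<and> \<not> up ((i+1) mod m)"
        have c1: "covers S le (xs!((i+1) mod m)) (xs!i)" using h updn[OF i] by blast
        have c2': "covers S le (xs!(((i+1) mod m + 1) mod m)) (xs!((i+1) mod m))" using h updn[OF i1] by blast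
        then have c2: "covers S le (xs!((i+2) mod m)) (xs!((i+1) mod m))" unfolding ss .
        have il: "i < length xs" using i m_def by simp
        have d1: "covers S (dual le) (xs!i) (xs!((i+1) mod length xs))"
          using c1 unfolding covers_dual m_def .
        have d2: "covers S (dual le) (xs!((i+1) mod length xs)) (xs!((i+2) mod length xs))"
          using c2 unfolding covers_dual m_def .
        have cyd: "cyc S (dual le) xs" using cy unfolding cyc_dual .
        obtain z where z: "z \<in> S" "z \<noteq> xs!((i+1) mod m)" "z \<noteq> xs!i" "z \<noteq> xs!((i+2) mod m)"
          "dual le (xs!i) z" "dual le z (xs!((i+2) mod m))"
          using PT[OF cyd Sx Md poset_dual[OF po] il d1 d2] unfolding m_def by blast
        have z5: "le z (xs!i)" "le (xs!((i+2) mod m)) z" using z(5,6) unfolding dual_def .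
        have n1: "\<not> le (xs!((i+1) mod m)) z" using c1 z z5 unfolding covers_def by blast
        have n2: "\<not> le z (xs!((i+1) mod m))" using c2 z z5 unfolding covers_def by blast
        have f1: "le (xs!((i+1) mod m)) (xs!i)" "xs!((i+1) mod m) \<noteq> xs!i" using c1 unfolding covers_def by blast+
        have f2: "le (xs!((i+2) mod m)) (xs!((i+1) mod m))" "xs!((i+2) mod m) \<noteq> xs!((i+1) mod m)"
          using c2 unfolding covers_def by blast+
        have "le (xs!((i+1) mod m)) z \<or> le z (xs!((i+1) mod m))"
          by (rule noV'[OF allS[OF i2] allS[OF i1] z(1) allS[OF i] f2(1) f1(1) z5(2) z5(1) f2(2) f1(2) z(4)[symmetric] z(3)])
        then show False using n1 n2 by blast
      qed
      show "up ((i+1) mod m) \<longleftrightarrow> \<not> up i" using A B by blast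
    qed
    have par: "\<And>i. i < m \<Longrightarrow> up i \<longleftrightarrow> (up 0 \<longleftrightarrow> even i)"
    proof -
      fix i show "i < m \<Longrightarrow> up i \<longleftrightarrow> (up 0 \<longleftrightarrow> even i)"
      proof (induction i)
        case 0 then show ?case by simp
      next
        case (Suc i)
        have im: "i < m" using Suc.prems by simp
        have md: "(i+1) mod m = Suc i" using Suc.prems by simp
        have "up (Suc i) \<longleftrightarrow> \<not> up i" using alt[OF im] unfolding md .
        then show ?case using Suc.IH[OF im] by simp
      qed
    qed
    have evm: "even m"
    proof (rule ccontr)
      assume "odd m"
      then have e: "even (m - 1)" using m3 by presburger
      have ml: "m - 1 < m" using m3 by simp
      have md: "(m - 1 + 1) mod m = 0" using m3 by simp
      have "up 0 \<longleftrightarrow> \<not> up (m-1)" using alt[OF ml] unfolding md .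
      then show False using par[OF ml] e by simp
    qed
    have m4: "m \<ge> 4" using m3 evm by presburger
    obtain ys where ycy: "cyc S le ys" and ySx: "set ys = S" and yl: "length ys = m"
      and yUP: "\<forall>i<length ys. covers S le (ys!i) (ys!((i+1) mod length ys)) \<longleftrightarrow> odd i"
    proof (cases "up 0")
      case False
      show ?thesis
      proof (rule that[OF cy Sx m_def[symmetric]])
        show "\<forall>i<length xs. covers S le (xs!i) (xs!((i+1) mod length xs)) \<longleftrightarrow> odd i"
        proof (intro allI impI)
          fix i assume "i < length xs"
          then have i: "i < m" using m_def by simp
          have "up i \<longleftrightarrow> odd i" using par[OF i] False by simp
          then show "covers S le (xs!i) (xs!((i+1) mod length xs)) \<longleftrightarrow> odd i"
            unfolding upE m_def .
        qed
      qed
    next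
      case True
      define ys where "ys = rotate 1 xs"
      have ly: "length ys = m" using ys_def m_def by simp
      have yi: "\<And>i. i < m \<Longrightarrow> ys!i = xs!((1 + i) mod m)"
        unfolding ys_def m_def by (rule nth_rotate) (simp add: m_def)
      show ?thesis
      proof (rule that[of ys])
        show "cyc S le ys" unfolding ys_def by (rule cyc_rotate[OF cy])
        show "set ys = S" using Sx ys_def by simp
        show "length ys = m" by (rule ly)
        show "\<forall>i<length ys. covers S le (ys!i) (ys!((i+1) mod length ys)) \<longleftrightarrow> odd i"
        proof (intro allI impI)
          fix i assume i: "i < length ys"
          then have i': "i < m" using ly by simp
          have i1: "(i+1) mod m < m" by (rule ltm)
          have e1: "ys!i = xs!((i+1) mod m)" using yi[OF i'] by (simp only: add.commute)
          have e2: "ys!((i+1) mod m) = xs!(((i+1) mod m + 1) mod m)" using yi[OF i1] by (simp only: add.commute)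
          have "covers S le (ys!i) (ys!((i+1) mod length ys)) \<longleftrightarrow> up ((i+1) mod m)"
            unfolding upE ly e1 e2 ..
          also have "\<dots> \<longleftrightarrow> \<not> up i" using alt[OF i'] .
          also have "\<dots> \<longleftrightarrow> odd i" using par[OF i'] True by simp
          finally show "covers S le (ys!i) (ys!((i+1) mod length ys)) \<longleftrightarrow> odd i" .
        qed
      qed
    qed
    have ev2: "even (length ys)" "4 \<le> length ys" using yl evm m4 by simp_all
    have "order_iso S le (W_set (length ys div 2)) (W_le (length ys div 2))"
      by (rule crown[OF fin po M ycy ySx ev2(1) ev2(2) yUP])
    moreover have "length ys div 2 \<ge> 2" using yl m4 by simp
    ultimately show ?thesis by blast
  qed
qed

end
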